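(* Let $(X,d),(Y,d)$ be metric spaces, $E,F$ strictly convex normed spaces over $\mathbb{K}$, and $T:\mathrm{Lip}(X,E)\to\mathrm{Lip}(Y,F)$ a surjective linear isometry satisfying Property P. If $f\in\mathrm{Lip}(X,E)$ satisfies $\|Tf(y_0)\|=\|Tf\|_\infty>L(Tf)$ for some $y_0\in Y$, then $L(f)\le\|f\|_\infty$.
   Context: $\mathbb{K}=\mathbb{R}$ or $\mathbb{C}$. Strictly convex: $\|e_1+e_2\|<2$ whenever $e_1\ne e_2$ have norm $1$. $\mathrm{Lip}(X,E)$: bounded Lipschitz maps $X\to E$, with Lipschitz number $L(f)$ and norm $\|f\|_L=\max\{\|f\|_\infty,L(f)\}$; $T$ is an isometry for this norm. For $e\in E$, $\tilde e$ is the constant function with value $e$; Property P: for every $y\in Y$ there is $e\in E$ with $(T\tilde e)(y)\ne0$. *)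

theory Defs
  imports "HOL-Analysis.Analysis"
begin

definition strictly_convex :: "'e::real_normed_vector itself \<Rightarrow> bool" where
  "strictly_convex _ \<longleftrightarrow>
     (\<forall>e1 e2::'e. norm e1 = 1 \<and> norm e2 = 1 \<and> e1 \<noteq> e2 \<longrightarrow> norm (e1 + e2) < 2)"

definition Lip :: "('x::metric_space \<Rightarrow> 'e::real_normed_vector) set" where
  "Lip = {f. bounded (range f) \<and> (\<exists>C. lipschitz_on C UNIV f)}"

text \<open>Lipschitz number L(f) (0 if X has at most one point).\<close>
definition lip_num :: "('x::metric_space \<Rightarrow> 'e::real_normed_vector) \<Rightarrow> real" where
  "lip_num f = Sup ({0} \<union> {dist (f x) (f y) / dist x y | x y. x \<noteq> y})"

definition sup_norm :: "('x \<Rightarrow> 'e::real_normed_vector) \<Rightarrow> real" where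
  "sup_norm f = Sup (range (\<lambda>x. norm (f x)))"

definition lip_norm :: "('x::metric_space \<Rightarrow> 'e::real_normed_vector) \<Rightarrow> real" where
  "lip_norm f = max (sup_norm f) (lip_num f)"

end

theory Submission
  imports Defs
begin

lemma const_Lip: "(\<lambda>x::'x::metric_space. e::'e::real_normed_vector) \<in> Lip"
  unfolding Lip_def using lipschitz_on_constant[of UNIV e] by auto

lemma add_const_Lip:
  assumes "f \<in> Lip" shows "(\<lambda>x::'x::metric_space. f x + (e::'e::real_normed_vector)) \<in> Lip"
proof -
  from assms obtain C where C: "C-lipschitz_on UNIV f" and b: "bounded (range f)"
    unfolding Lip_def by auto
  have "range (\<lambda>x. f x + e) = (\<lambda>x. e + x) ` range f" by (auto simp: add.commute)
  then have "bounded (range (\<lambda>x. f x + e))" using bounded_translation[OF b] by simp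
  moreover have "(C+0)-lipschitz_on UNIV (\<lambda>x. f x + e)"
    by (rule lipschitz_on_add[OF C lipschitz_on_constant])
  ultimately show ?thesis unfolding Lip_def by auto
qed

lemma norm_le_sup:
  assumes "f \<in> Lip" shows "norm (f x) \<le> sup_norm f"
proof -
  from assms have "bounded (range f)" unfolding Lip_def by auto
  then obtain B where "\<forall>y\<in>range f. norm y \<le> B" by (auto simp: bounded_iff)
  then have "bdd_above (range (\<lambda>x. norm (f x)))" by (auto intro!: bdd_aboveI)
  then show ?thesis unfolding sup_norm_def using cSUP_upper[of x UNIV "\<lambda>x. norm (f x)"] by simp
qed

lemma sc_lemma:
  fixes a v :: "'f::real_normed_vector"
  assumes sc: "strictly_convex TYPE('f)" and M: "M > 0" and na: "norm a = M"
    and p: "norm (a + v) \<le> M" and q: "norm (a - v) \<le> M"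
  shows "v = 0"
proof (rule ccontr)
  assume v: "v \<noteq> 0"
  have s: "(a + v) + (a - v) = 2 *\<^sub>R a" by (simp add: scaleR_2)
  have "2 * M = norm ((a + v) + (a - v))" using s na M by simp
  also have "\<dots> \<le> norm (a + v) + norm (a - v)" by (rule norm_triangle_ineq)
  finally have np: "norm (a + v) = M" and nq: "norm (a - v) = M" using p q by linarith+
  let ?e1 = "(1/M) *\<^sub>R (a + v)" and ?e2 = "(1/M) *\<^sub>R (a - v)"
  have "norm ?e1 = 1" "norm ?e2 = 1" using np nq M by auto
  moreover have "?e1 \<noteq> ?e2"
  proof
    assume "?e1 = ?e2"
    then have "a + v = a - v" using M by simp
    then have "2 *\<^sub>R v = 0" by (simp add: scaleR_2 algebra_simps)
    then show False using v by simp
  qed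
  ultimately have "norm (?e1 + ?e2) < 2" using sc unfolding strictly_convex_def by blast
  moreover have "?e1 + ?e2 = (1/M) *\<^sub>R (2 *\<^sub>R a)" using s by (simp add: scaleR_add_right[symmetric])
  ultimately have "norm ((1/M) *\<^sub>R (2 *\<^sub>R a)) < 2" by simp
  with na M show False by simp
qed

theorem lemma4p3:
  fixes T :: "('x::metric_space \<Rightarrow> 'e::real_normed_vector) \<Rightarrow> ('y::metric_space \<Rightarrow> 'f::real_normed_vector)"
    and f :: "'x \<Rightarrow> 'e" and y0 :: 'y
  assumes sc_E: "strictly_convex TYPE('e)"
    and sc_F: "strictly_convex TYPE('f)"
    and maps: "\<forall>g\<in>Lip. T g \<in> Lip"
    and surj: "T ` Lip = Lip"
    and add: "\<forall>g\<in>Lip. \<forall>h\<in>Lip. T (\<lambda>x. g x + h x) = (\<lambda>y. T g y + T h y)"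
    and smult: "\<forall>g\<in>Lip. \<forall>c::real. T (\<lambda>x. c *\<^sub>R g x) = (\<lambda>y. c *\<^sub>R T g y)"
    and isom: "\<forall>g\<in>Lip. lip_norm (T g) = lip_norm g"
    and propP: "\<forall>y. \<exists>e::'e. T (\<lambda>x. e) y \<noteq> 0"
    and f_Lip: "f \<in> Lip"
    and peak: "norm (T f y0) = sup_norm (T f)"
    and gt: "sup_norm (T f) > lip_num (T f)"
  shows "lip_num f \<le> sup_norm f"
proof (rule ccontr)
  assume "\<not> lip_num f \<le> sup_norm f"
  then have lt: "sup_norm f < lip_num f" by simp
  obtain e :: 'e where u: "T (\<lambda>x. e) y0 \<noteq> 0" using propP by blast
  define L where "L = lip_num f"
  have sf0: "0 \<le> sup_norm f" using norm_le_sup[OF f_Lip, of undefined] norm_ge_zero[of "f undefined"] by linarith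
  have L0: "L > 0" using lt sf0 L_def by simp
  have M: "sup_norm (T f) = L"
    using isom f_Lip gt lt unfolding lip_norm_def L_def by auto
  define t where "t = (L - sup_norm f) / (norm e + 1)"
  have t0: "t > 0" using lt L_def unfolding t_def by (intro divide_pos_pos) (auto simp: add_nonneg_pos)
  have te: "t * norm e < L - sup_norm f"
  proof -
    have "t * norm e < t * (norm e + 1)" using t0 by simp
    also have "\<dots> = L - sup_norm f" proof -
      have "norm e + 1 \<noteq> 0" using norm_ge_zero[of e] by linarith
      then show ?thesis by (simp add: t_def)
    qed
    finally show ?thesis .
  qed
  have key: "norm (T f y0 + c *\<^sub>R T (\<lambda>x. e) y0) \<le> L" if c: "\<bar>c\<bar> = t" for c
  proof -
    let ?g = "\<lambda>x. f x + c *\<^sub>R e"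
    have gL: "?g \<in> Lip" by (rule add_const_Lip[OF f_Lip])
    have ceL: "(\<lambda>x::'x. c *\<^sub>R e) \<in> Lip" by (rule const_Lip)
    have Tg: "T ?g = (\<lambda>y. T f y + c *\<^sub>R T (\<lambda>x. e) y)"
    proof -
      have "T ?g = (\<lambda>y. T f y + T (\<lambda>x. c *\<^sub>R e) y)"
        using add f_Lip ceL by fastforce
      moreover have "T (\<lambda>x. c *\<^sub>R e) = (\<lambda>y. c *\<^sub>R T (\<lambda>x. e) y)"
        using smult const_Lip[of e] by fastforce
      ultimately show ?thesis by simp
    qed
    have lg: "lip_num ?g = L"
      unfolding lip_num_def L_def by (simp add: dist_norm)
    have "(SUP x. norm (?g x)) \<le> sup_norm f + t * norm e"
    proof (rule cSUP_least)
      fix x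
      have "norm (f x + c *\<^sub>R e) \<le> norm (f x) + \<bar>c\<bar> * norm e"
        using norm_triangle_ineq[of "f x" "c *\<^sub>R e"] by simp
      then show "norm (f x + c *\<^sub>R e) \<le> sup_norm f + t * norm e"
        using norm_le_sup[OF f_Lip, of x] c by simp
    qed simp
    moreover have "sup_norm ?g = (SUP x. norm (?g x))" by (simp only: sup_norm_def)
    ultimately have "sup_norm ?g < L" using te by linarith
    then have "lip_norm ?g = L" using lg unfolding lip_norm_def by simp
    then have "lip_norm (T ?g) = L" using isom gL by simp
    moreover have "norm (T ?g y0) \<le> sup_norm (T ?g)"
      using norm_le_sup maps gL by blast
    ultimately show ?thesis using Tg unfolding lip_norm_def by simp
  qed
  have "t *\<^sub>R T (\<lambda>x. e) y0 = 0"
  proof (rule sc_lemma[OF sc_F L0])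
    show "norm (T f y0) = L" using peak M by simp
    show "norm (T f y0 + t *\<^sub>R T (\<lambda>x. e) y0) \<le> L" using key[of t] t0 by simp
    show "norm (T f y0 - t *\<^sub>R T (\<lambda>x. e) y0) \<le> L" using key[of "-t"] t0 by simp
  qed
  then show False using u t0 by simp
qed

end
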